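(* Let $\mathcal H_A,\mathcal H_B$ be Hilbert spaces of dimension $N$, let $\rho_{AB}$ be a density operator on $\mathcal H_A\otimes\mathcal H_B$, and let $X$ be a projective measurement on $A$ given by an orthonormal basis $\{|x_i\rangle\}_{i=1}^N$ of $\mathcal H_A$. For every projective measurement $X'$ on $B$, given by an orthonormal basis $\{|x'_\mu\rangle\}_{\mu=1}^N$ of $\mathcal H_B$, let $\vec p(x|x')\in\mathbb R^N$ be the majorized marginal distribution defined in the context. Then there exists a unique least upper bound $\vec s^{\,(x)}$, with respect to the majorization order, of the set $\{\vec p(x|x') : X'\}$; in particular $\vec p(x|x')\prec \vec s^{\,(x)}$ for all $X'$. Moreover $\vec s^{\,(x)}$ depends only on $X$ and $\rho_{AB}$ and is given by $$\vec s^{\,(x)}=\vec p(x|x'^{(1)})\vee \vec p(x|x'^{(2)})\vee\cdots\vee \vec p(x|x'^{(N)}),$$ where for each $k\in\{1,\dots,N\}$, $X'^{(k)}$ is a measurement on $B$ for which $\sum_{i=1}^k p_i(x|x'^{(k)})=\max_{X'}\sum_{i=1}^k p_i(x|x')$ (components listed in descending order).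
   Context: Joint distribution: $P_{i\mu}(X,X')=\langle x_i|\otimes\langle x'_\mu|\,\rho_{AB}\,|x_i\rangle\otimes|x'_\mu\rangle$. For each $\mu$, let $\vec p^{\,(\mu)}(x)=(P_{1\mu},\dots,P_{N\mu})$ and let $\vec p^{\,(\mu)\downarrow}(x)$ denote this vector with components rearranged in descending order. The majorized marginal distribution is $\vec p(x|x')=\sum_{\mu=1}^N \vec p^{\,(\mu)\downarrow}(x)$ (a probability vector with components in descending order). Majorization: for $\vec a,\vec b\in\mathbb R^N$ with components sorted in descending order, $\vec a\prec\vec b$ means $\sum_{i=1}^k a_i\le\sum_{i=1}^k b_i$ for all $k=1,\dots,N$, with equality for $k=N$. On the set of descending-ordered probability vectors, $\prec$ is a lattice order, and $\vec a\vee\vec b$ denotes the join (least upper bound) of $\vec a$ and $\vec b$ in this majorization lattice. *)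

theory Defs
  imports Complex_Main
begin

text \<open>Vectors of \<open>C^N\<close> are functions \<open>nat \<Rightarrow> complex\<close> (components indexed by \<open>0..<N\<close>).
  Operators on \<open>C^N \<otimes> C^N\<close> are functions \<open>nat \<Rightarrow> nat \<Rightarrow> complex\<close> indexed by \<open>0..<N*N\<close>,
  where the product basis vector \<open>|a> \<otimes> |b>\<close> has index \<open>a*N + b\<close>.\<close>

definition cinner :: "nat \<Rightarrow> (nat \<Rightarrow> complex) \<Rightarrow> (nat \<Rightarrow> complex) \<Rightarrow> complex" where
  "cinner N u v = (\<Sum>a<N. cnj (u a) * v a)"

text \<open>An orthonormal basis \<open>{|x_i>}_{i<N}\<close> of \<open>C^N\<close>; \<open>x i a\<close> is the a-th component of \<open>|x_i>\<close>.
  (N orthonormal vectors in an N-dimensional space automatically form a basis.)\<close>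
definition onb :: "nat \<Rightarrow> (nat \<Rightarrow> nat \<Rightarrow> complex) \<Rightarrow> bool" where
  "onb N x \<longleftrightarrow> (\<forall>i<N. \<forall>j<N. cinner N (x i) (x j) = (if i = j then 1 else 0))"

definition density_op :: "nat \<Rightarrow> (nat \<Rightarrow> nat \<Rightarrow> complex) \<Rightarrow> bool" where
  "density_op N \<rho> \<longleftrightarrow>
     (\<forall>r<N*N. \<forall>s<N*N. \<rho> r s = cnj (\<rho> s r)) \<and>
     (\<forall>v::nat \<Rightarrow> complex. 0 \<le> Re (\<Sum>r<N*N. \<Sum>s<N*N. cnj (v r) * \<rho> r s * v s)) \<and>
     (\<Sum>r<N*N. \<rho> r r) = 1"

text \<open>Joint distribution \<open>P_{i\<mu>} = (<x_i| \<otimes> <x'_\<mu>|) \<rho> (|x_i> \<otimes> |x'_\<mu>>)\<close> (a real number for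
  a density operator; we take the real part).\<close>
definition joint :: "nat \<Rightarrow> (nat \<Rightarrow> nat \<Rightarrow> complex) \<Rightarrow> (nat \<Rightarrow> nat \<Rightarrow> complex)
    \<Rightarrow> (nat \<Rightarrow> nat \<Rightarrow> complex) \<Rightarrow> nat \<Rightarrow> nat \<Rightarrow> real" where
  "joint N \<rho> x y i \<mu> = Re (\<Sum>a<N. \<Sum>b<N. \<Sum>c<N. \<Sum>d<N.
      cnj (x i a) * cnj (y \<mu> b) * \<rho> (a*N + b) (c*N + d) * x i c * y \<mu> d)"

definition desc :: "nat \<Rightarrow> (nat \<Rightarrow> real) \<Rightarrow> real list" where
  "desc N f = rev (sort (map f [0..<N]))"

definition pcond :: "nat \<Rightarrow> (nat \<Rightarrow> nat \<Rightarrow> complex) \<Rightarrow> (nat \<Rightarrow> nat \<Rightarrow> complex)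
    \<Rightarrow> (nat \<Rightarrow> nat \<Rightarrow> complex) \<Rightarrow> real list" where
  "pcond N \<rho> x y = map (\<lambda>i. \<Sum>\<mu><N. desc N (\<lambda>j. joint N \<rho> x y j \<mu>) ! i) [0..<N]"

text \<open>Majorization \<open>a \<prec> b\<close> (for vectors listed in descending order).\<close>
definition majorized :: "real list \<Rightarrow> real list \<Rightarrow> bool" where
  "majorized a b \<longleftrightarrow> length a = length b \<and>
     (\<forall>k\<le>length a. sum_list (take k a) \<le> sum_list (take k b)) \<and> sum_list a = sum_list b"

definition desc_prob :: "nat \<Rightarrow> real list set" where
  "desc_prob N = {a. length a = N \<and> sorted (rev a) \<and> (\<forall>t\<in>set a. 0 \<le> t) \<and> sum_list a = 1}"

definition maj_lub :: "nat \<Rightarrow> real list set \<Rightarrow> real list \<Rightarrow> bool" where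
  "maj_lub N S s \<longleftrightarrow> s \<in> desc_prob N \<and> (\<forall>a\<in>S. majorized a s) \<and>
     (\<forall>t\<in>desc_prob N. (\<forall>a\<in>S. majorized a t) \<longrightarrow> majorized s t)"

definition maj_join :: "nat \<Rightarrow> real list \<Rightarrow> real list \<Rightarrow> real list" where
  "maj_join N a b = (THE s. maj_lub N {a, b} s)"

end

theory Submission
  imports Defs "HOL-Analysis.Analysis" "HOL-Combinatorics.List_Permutation" "Jordan_Normal_Form.Determinant"
begin


lemma exch_sum:
  fixes ys :: "nat \<Rightarrow> real"
  assumes mono: "\<And>i j. i \<le> j \<Longrightarrow> j < N \<Longrightarrow> ys j \<le> ys i"
    and U: "U \<subseteq> {..<N}" and cU: "card U = k"
  shows "sum ys U \<le> sum ys {..<k}"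
proof -
  have fU: "finite U" using U finite_subset by blast
  define K where "K = {..<k::nat}"
  define A where "A = U - K"
  define B where "B = K - U"
  have "card A = card U - card (U \<inter> K)" unfolding A_def
    by (simp add: card_Diff_subset_Int fU)
  moreover have "card B = card K - card (K \<inter> U)" unfolding B_def
    by (simp add: card_Diff_subset_Int K_def)
  ultimately have cAB: "card A = card B" using cU K_def by (simp add: Int_commute)
  have fA: "finite A" "finite B" using fU K_def A_def B_def by auto
  obtain g where g: "bij_betw g A B" using finite_same_card_bij[OF fA cAB] by blast
  have kN: "k \<le> N" using card_mono[OF _ U] cU by simp
  have "sum ys A \<le> sum (ys \<circ> g) A"
  proof (rule sum_mono)
    fix a assume a: "a \<in> A"
    then have "g a \<in> B" using g bij_betwE by blast
    then have "g a < k" "k \<le> a" "a < N" using a U unfolding A_def B_def K_def by auto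
    then show "ys a \<le> (ys \<circ> g) a" using mono[of "g a" a] by simp
  qed
  also have "\<dots> = sum ys B" using sum.reindex_bij_betw[OF g] by simp
  finally have AB: "sum ys A \<le> sum ys B" .
  have "sum ys U = sum ys (U \<inter> K) + sum ys A" unfolding A_def
    using sum.Int_Diff[OF fU] by simp
  moreover have "sum ys K = sum ys (K \<inter> U) + sum ys B" unfolding B_def K_def
    using sum.Int_Diff[of "{..<k}" ys U] by simp
  ultimately show ?thesis using AB K_def by (simp add: Int_commute)
qed

lemma desc_length[simp]: "length (desc N v) = N"
  by (simp add: desc_def)

lemma desc_mono: assumes "i \<le> j" "j < N" shows "desc N v ! j \<le> desc N v ! i"
proof -
  let ?l = "sort (map v [0..<N])"
  have len: "length ?l = N" by simp
  have "?l ! (N - Suc j) \<le> ?l ! (N - Suc i)"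
    using assms by (intro sorted_nth_mono) auto
  then show ?thesis unfolding desc_def using assms len by (simp add: rev_nth)
qed

lemma desc_mset: "mset (desc N v) = mset (map v [0..<N])"
  by (simp add: desc_def)

lemma desc_sum: "sum_list (desc N v) = (\<Sum>j<N. v j)"
proof -
  have "sum_list (desc N v) = sum_list (map v [0..<N])"
    by (metis desc_mset sum_mset_sum_list)
  also have "\<dots> = (\<Sum>j<N. v j)"
    by (simp add: sum_set_upt_conv_sum_list_nat[symmetric] atLeast0LessThan)
  finally show ?thesis .
qed

lemma desc_nth_in: assumes "i < N" shows "\<exists>j<N. desc N v ! i = v j"
proof -
  have "desc N v ! i \<in> set (desc N v)" using assms by simp
  also have "set (desc N v) = v ` {..<N}" unfolding desc_def by auto
  finally show ?thesis by auto
qed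

lemma desc_bij: "\<exists>f. bij_betw f {..<N} {..<N} \<and> (\<forall>i<N. desc N v ! i = v (f i))"
proof -
  have "desc N v <~~> map v [0..<N]" by (rule desc_mset)
  from permutation_Ex_bij[OF this] obtain f where
    f: "bij_betw f {..<N} {..<N}" "\<forall>i<N. desc N v ! i = map v [0..<N] ! f i" by auto
  have "\<forall>i<N. desc N v ! i = v (f i)"
  proof (intro allI impI)
    fix i assume "i < N"
    then have "f i < N" using f(1) bij_betwE by blast
    then show "desc N v ! i = v (f i)" using f(2) \<open>i < N\<close> by simp
  qed
  then show ?thesis using f(1) by blast
qed

lemma topk_Max:
  assumes kN: "k \<le> N"
  shows "(\<Sum>i<k. desc N v ! i) = Max ((\<lambda>T. \<Sum>j\<in>T. v j) ` {T. T \<subseteq> {..<N} \<and> card T = k})"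
proof -
  obtain f where f: "bij_betw f {..<N} {..<N}" and fv: "\<And>i. i<N \<Longrightarrow> desc N v ! i = v (f i)"
    using desc_bij by blast
  let ?F = "{T. T \<subseteq> {..<N} \<and> card T = k}"
  have finF: "finite ?F"
    by (rule finite_subset[of _ "Pow {..<N}"]) auto
  have T0: "f ` {..<k} \<in> ?F"
  proof -
    have "inj_on f {..<k}" using f kN unfolding bij_betw_def by (auto intro: inj_on_subset)
    then show ?thesis using f kN by (auto simp: card_image dest: bij_betwE)
  qed
  have val0: "(\<Sum>j\<in>f ` {..<k}. v j) = (\<Sum>i<k. desc N v ! i)"
  proof -
    have "inj_on f {..<k}" using f kN unfolding bij_betw_def by (auto intro: inj_on_subset)
    then have "(\<Sum>j\<in>f ` {..<k}. v j) = (\<Sum>i<k. v (f i))" by (simp add: sum.reindex)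
    also have "\<dots> = (\<Sum>i<k. desc N v ! i)" using fv kN by simp
    finally show ?thesis .
  qed
  have upper: "(\<Sum>j\<in>T. v j) \<le> (\<Sum>i<k. desc N v ! i)" if T: "T \<in> ?F" for T
  proof -
    define U where "U = {i\<in>{..<N}. f i \<in> T}"
    have imgU: "f ` U = T" using T f unfolding U_def bij_betw_def by auto
    have injU: "inj_on f U" using f unfolding U_def bij_betw_def by (auto intro: inj_on_subset)
    have cT: "card T = k" using T by simp
    have "card U = card (f ` U)" using card_image[OF injU] by simp
    then have cU: "card U = k" using cT imgU by simp
    have UN: "U \<subseteq> {..<N}" by (auto simp: U_def)
    have "(\<Sum>j\<in>T. v j) = (\<Sum>i\<in>U. v (f i))" using imgU injU by (metis sum.reindex_cong)
    also have "\<dots> = (\<Sum>i\<in>U. desc N v ! i)" using fv U_def by simp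
    also have "\<dots> \<le> (\<Sum>i<k. desc N v ! i)"
      by (rule exch_sum[of N, OF _ UN cU]) (simp add: desc_mono)
    finally show ?thesis .
  qed
  show ?thesis
  proof (rule antisym)
    show "(\<Sum>i<k. desc N v ! i) \<le> Max ((\<lambda>T. \<Sum>j\<in>T. v j) ` ?F)"
      using finF T0 val0 by (metis (no_types, lifting) Max_ge finite_imageI image_eqI)
    show "Max ((\<lambda>T. \<Sum>j\<in>T. v j) ` ?F) \<le> (\<Sum>i<k. desc N v ! i)"
      using finF T0 upper by (subst Max_le_iff) auto
  qed
qed



lemma sum_NN: "(\<Sum>r<N*N. f r) = (\<Sum>a<N. \<Sum>b<N. f (a*N + (b::nat)))"
  using sum_mult_product[of f N N] by (simp add: add.commute)

lemma swap4:
  fixes M :: "'m set" and A :: "'a set" and B :: "'b set" and C :: "'c set" and D :: "'d set"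
  shows "(\<Sum>m\<in>M. \<Sum>a\<in>A. \<Sum>b\<in>B. \<Sum>c\<in>C. \<Sum>d\<in>D. F m a b c d)
       = (\<Sum>a\<in>A. \<Sum>b\<in>B. \<Sum>c\<in>C. \<Sum>d\<in>D. \<Sum>m\<in>M. (F m a b c d :: complex))"
  by (simp only: sum.swap[of _ M])

lemma onb_complete:
  assumes "onb N x" "a < N" "c < N"
  shows "(\<Sum>i<N. x i a * cnj (x i c)) = (if a = c then 1 else 0)"
proof -
  define A where "A = mat N N (\<lambda>(i,a). cnj (x i a))"
  define B where "B = mat N N (\<lambda>(a,j). x j a)"
  have "A * B = 1\<^sub>m N"
    by (rule eq_matI) (use assms(1) in \<open>auto simp: A_def B_def scalar_prod_def onb_def cinner_def atLeast0LessThan\<close>)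
  then have "B * A = 1\<^sub>m N"
    by (intro mat_mult_left_right_inverse[of A N B]) (auto simp: A_def B_def)
  then have "(B * A) $$ (a,c) = 1\<^sub>m N $$ (a,c)" by simp
  then show ?thesis using assms(2,3)
    by (simp add: A_def B_def scalar_prod_def atLeast0LessThan)
qed

lemma onb_complete':
  assumes "onb N x" "a < N" "c < N"
  shows "(\<Sum>i<N. cnj (x i a) * x i c) = (if a = c then 1 else 0)"
proof -
  have "(\<Sum>i<N. cnj (x i a) * x i c) = (\<Sum>i<N. x i c * cnj (x i a))" by (simp add: mult.commute)
  also have "\<dots> = (if c = a then 1 else 0)" by (rule onb_complete[OF assms(1,3,2)])
  finally show ?thesis by auto
qed

lemma delta2:
  assumes "a < N" "b < (N::nat)"
  shows "(\<Sum>c<N. \<Sum>d<N. if c = a \<and> d = b then g c d else (0::complex)) = g a b"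
proof -
  have "(\<Sum>d<N. if c = a \<and> d = b then g c d else 0) = (if c = a then g c b else 0)" for c
    by (cases "c = a") (simp_all add: assms sum.delta)
  then show ?thesis by (simp add: assms sum.delta)
qed

lemma sum4_cong:
  assumes "\<And>a b c d. a < N \<Longrightarrow> b < N \<Longrightarrow> c < N \<Longrightarrow> d < N \<Longrightarrow> F a b c d = G a b c d"
  shows "(\<Sum>a<N. \<Sum>b<N. \<Sum>c<N. \<Sum>d<N. F a b c d) = (\<Sum>a<N. \<Sum>b<N. \<Sum>c<N. \<Sum>d<N. (G a b c d :: complex))"
  by (rule sum.cong[OF refl], rule sum.cong[OF refl], rule sum.cong[OF refl], rule sum.cong[OF refl])
     (simp add: assms)

lemma inner6:
  "(\<Sum>j<N. \<Sum>m<N. cnj (x j a) * cnj (y m b) * r * x j c * y m d)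
   = r * ((\<Sum>j<N. cnj (x j a) * x j c) * (\<Sum>m<N. cnj (y m b) * y m d))"
  by (subst sum_product) (simp add: sum_distrib_left mult_ac)

lemma js1:
  "(\<Sum>j<N. \<Sum>m<N. \<Sum>a<N. \<Sum>b<N. \<Sum>c<N. \<Sum>d<N. G j m a b c d)
   = (\<Sum>a<N. \<Sum>b<N. \<Sum>c<N. \<Sum>d<N. \<Sum>j<N. \<Sum>m<N. (G j m a b c d :: complex))"
proof -
  have "(\<Sum>j<N. \<Sum>m<N. \<Sum>a<N. \<Sum>b<N. \<Sum>c<N. \<Sum>d<N. G j m a b c d)
      = (\<Sum>j<N. \<Sum>a<N. \<Sum>b<N. \<Sum>c<N. \<Sum>d<N. \<Sum>m<N. G j m a b c d)"
    by (rule sum.cong[OF refl], rule swap4)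
  then show ?thesis by (rule trans[OF _ swap4])
qed

lemma js2:
  assumes x: "onb N x" and y: "onb N y"
  shows "(\<Sum>a<N. \<Sum>b<N. \<Sum>c<N. \<Sum>d<N. \<Sum>j<N. \<Sum>m<N.
      cnj (x j a) * cnj (y m b) * \<rho> (a*N + b) (c*N + d) * x j c * y m d)
    = (\<Sum>a<N. \<Sum>b<N. \<rho> (a*N + b) (a*N + b))"
proof -
  have "(\<Sum>a<N. \<Sum>b<N. \<Sum>c<N. \<Sum>d<N. \<Sum>j<N. \<Sum>m<N.
      cnj (x j a) * cnj (y m b) * \<rho> (a*N + b) (c*N + d) * x j c * y m d)
    = (\<Sum>a<N. \<Sum>b<N. \<Sum>c<N. \<Sum>d<N. \<rho> (a*N + b) (c*N + d) *
       ((\<Sum>j<N. cnj (x j a) * x j c) * (\<Sum>m<N. cnj (y m b) * y m d)))"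
    by (simp only: inner6)
  moreover have "(\<Sum>a<N. \<Sum>b<N. \<Sum>c<N. \<Sum>d<N. \<rho> (a*N + b) (c*N + d) *
       ((\<Sum>j<N. cnj (x j a) * x j c) * (\<Sum>m<N. cnj (y m b) * y m d)))
     = (\<Sum>a<N. \<Sum>b<N. \<Sum>c<N. \<Sum>d<N.
       (if c = a \<and> d = b then \<rho> (a*N + b) (c*N + d) else 0))"
    by (rule sum4_cong) (simp add: onb_complete'[OF x] onb_complete'[OF y])
  moreover have "(\<Sum>a<N. \<Sum>b<N. \<Sum>c<N. \<Sum>d<N.
       (if c = a \<and> d = b then \<rho> (a*N + b) (c*N + d) else 0))
     = (\<Sum>a<N. \<Sum>b<N. \<rho> (a*N + b) (a*N + b))"
    by (rule sum.cong[OF refl], rule sum.cong[OF refl]) (simp add: delta2)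
  ultimately show ?thesis by (rule trans[OF trans])
qed

lemma joint_sum:
  assumes rho: "density_op N \<rho>" and x: "onb N x" and y: "onb N y"
  shows "(\<Sum>j<N. \<Sum>m<N. joint N \<rho> x y j m) = 1"
proof -
  have J: "(\<Sum>j<N. \<Sum>m<N. joint N \<rho> x y j m) = Re (\<Sum>j<N. \<Sum>m<N. \<Sum>a<N. \<Sum>b<N. \<Sum>c<N. \<Sum>d<N.
      cnj (x j a) * cnj (y m b) * \<rho> (a*N + b) (c*N + d) * x j c * y m d)"
    by (simp only: joint_def Re_sum)
  have T: "(\<Sum>a<N. \<Sum>b<N. \<rho> (a*N + b) (a*N + b)) = 1"
  proof -
    have "(\<Sum>r<N*N. \<rho> r r) = 1" using rho unfolding density_op_def by blast
    then show ?thesis using sum_NN[of "\<lambda>r. \<rho> r r" N] by simp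
  qed
  have "(\<Sum>j<N. \<Sum>m<N. \<Sum>a<N. \<Sum>b<N. \<Sum>c<N. \<Sum>d<N.
      cnj (x j a) * cnj (y m b) * \<rho> (a*N + b) (c*N + d) * x j c * y m d) = 1"
    (is "?L = 1")
  proof -
    have A: "?L = (\<Sum>a<N. \<Sum>b<N. \<Sum>c<N. \<Sum>d<N. \<Sum>j<N. \<Sum>m<N.
      cnj (x j a) * cnj (y m b) * \<rho> (a*N + b) (c*N + d) * x j c * y m d)" by (rule js1)
    have B: "(\<Sum>a<N. \<Sum>b<N. \<Sum>c<N. \<Sum>d<N. \<Sum>j<N. \<Sum>m<N.
      cnj (x j a) * cnj (y m b) * \<rho> (a*N + b) (c*N + d) * x j c * y m d) = (\<Sum>a<N. \<Sum>b<N. \<rho> (a*N + b) (a*N + b))"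
      by (rule js2[OF x y])
    show ?thesis by (rule trans[OF A trans[OF B T]])
  qed
  then show ?thesis unfolding J by simp
qed

lemma joint_nonneg:
  assumes rho: "density_op N \<rho>"
  shows "0 \<le> joint N \<rho> x y i m"
proof -
  define v where "v r = x i (r div N) * y m (r mod N)" for r
  have psd: "0 \<le> Re (\<Sum>r<N*N. \<Sum>s<N*N. cnj (v r) * \<rho> r s * v s)"
    using rho unfolding density_op_def by blast
  have "(\<Sum>r<N*N. \<Sum>s<N*N. cnj (v r) * \<rho> r s * v s)
     = (\<Sum>a<N. \<Sum>b<N. \<Sum>c<N. \<Sum>d<N. cnj (v (a*N+b)) * \<rho> (a*N+b) (c*N+d) * v (c*N+d))"
    by (simp add: sum_NN)
  also have "\<dots> = (\<Sum>a<N. \<Sum>b<N. \<Sum>c<N. \<Sum>d<N.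
      cnj (x i a) * cnj (y m b) * \<rho> (a*N + b) (c*N + d) * x i c * y m d)"
    by (intro sum.cong refl) (simp add: v_def mult_ac)
  finally have eq: "(\<Sum>r<N*N. \<Sum>s<N*N. cnj (v r) * \<rho> r s * v s) = (\<Sum>a<N. \<Sum>b<N. \<Sum>c<N. \<Sum>d<N.
      cnj (x i a) * cnj (y m b) * \<rho> (a*N + b) (c*N + d) * x i c * y m d)" .
  show ?thesis using psd unfolding eq joint_def .
qed

lemma pcond_length[simp]: "length (pcond N \<rho> x y) = N"
  by (simp add: pcond_def)

lemma pcond_nth: "i < N \<Longrightarrow> pcond N \<rho> x y ! i = (\<Sum>m<N. desc N (\<lambda>j. joint N \<rho> x y j m) ! i)"
  by (simp add: pcond_def)

lemma pcond_take:
  assumes "k \<le> N"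
  shows "sum_list (take k (pcond N \<rho> x y)) = (\<Sum>m<N. \<Sum>i<k. desc N (\<lambda>j. joint N \<rho> x y j m) ! i)"
proof -
  have "take k (pcond N \<rho> x y) = map (\<lambda>i. \<Sum>m<N. desc N (\<lambda>j. joint N \<rho> x y j m) ! i) [0..<k]"
    using assms by (simp add: pcond_def take_map)
  then have "sum_list (take k (pcond N \<rho> x y)) = (\<Sum>i<k. \<Sum>m<N. desc N (\<lambda>j. joint N \<rho> x y j m) ! i)"
    by (simp add: sum_set_upt_conv_sum_list_nat[symmetric] atLeast0LessThan)
  then show ?thesis by (simp add: sum.swap[of _ "{..<k}"])
qed

lemma pcond_desc_prob:
  assumes rho: "density_op N \<rho>" and x: "onb N x" and y: "onb N y"
  shows "pcond N \<rho> x y \<in> desc_prob N"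
proof -
  let ?p = "pcond N \<rho> x y"
  let ?c = "\<lambda>m j. joint N \<rho> x y j m"
  have mono: "?p ! j \<le> ?p ! i" if "i \<le> j" "j < N" for i j
    using that by (simp add: pcond_nth desc_mono sum_mono)
  have sorted: "sorted (rev ?p)"
  proof (subst sorted_iff_nth_mono, intro allI impI)
    fix i j assume "i \<le> j" "j < length (rev ?p)"
    then show "rev ?p ! i \<le> rev ?p ! j" using mono by (simp add: rev_nth)
  qed
  have nn: "0 \<le> t" if "t \<in> set ?p" for t
  proof -
    obtain i where i: "i < N" "t = ?p ! i" using \<open>t \<in> set ?p\<close> by (auto simp: in_set_conv_nth)
    have "0 \<le> desc N (?c m) ! i" for m
      using desc_nth_in[OF i(1), of "?c m"] joint_nonneg[OF rho] by auto
    then show ?thesis using i by (simp add: pcond_nth sum_nonneg)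
  qed
  have "sum_list ?p = (\<Sum>m<N. \<Sum>i<N. desc N (?c m) ! i)"
    using pcond_take[of N N] by simp
  also have "\<dots> = (\<Sum>m<N. \<Sum>j<N. ?c m j)"
  proof (rule sum.cong[OF refl])
    fix m
    show "(\<Sum>i<N. desc N (?c m) ! i) = (\<Sum>j<N. ?c m j)"
      using desc_sum[of N "?c m"] by (simp add: sum_list_sum_nth atLeast0LessThan)
  qed
  also have "\<dots> = (\<Sum>j<N. \<Sum>m<N. ?c m j)" by (rule sum.swap)
  also have "\<dots> = 1" using joint_sum[OF rho x y] by simp
  finally show ?thesis using sorted nn by (simp add: desc_prob_def)
qed



lemma take_Suc_sum:
  assumes "i < length a"
  shows "sum_list (take (Suc i) a) = sum_list (take i a) + (a ! i :: real)"
  using assms by (simp add: take_Suc_conv_app_nth)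

lemma take_map_upt_sum:
  assumes "k \<le> N"
  shows "sum_list (take k (map f [0..<N])) = (\<Sum>i<k. (f i :: real))"
proof -
  have "take k (map f [0..<N]) = map f [0..<k]" using assms by (simp add: take_map)
  then show ?thesis by (simp add: sum_set_upt_conv_sum_list_nat[symmetric] atLeast0LessThan)
qed

lemma maj_refl: "majorized a a"
  by (simp add: majorized_def)

lemma maj_trans: "majorized a b \<Longrightarrow> majorized b c \<Longrightarrow> majorized a c"
  unfolding majorized_def by (metis order_trans)

lemma maj_antisym:
  assumes ab: "majorized a b" and ba: "majorized b a"
  shows "a = b"
proof -
  have len: "length a = length b" using ab by (simp add: majorized_def)
  have eq: "sum_list (take k a) = sum_list (take k b)" if "k \<le> length a" for k
    using ab ba that len unfolding majorized_def by (metis order_antisym)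
  show ?thesis
  proof (rule nth_equalityI[OF len])
    fix i assume i: "i < length a"
    have "sum_list (take (Suc i) a) = sum_list (take i a) + a ! i" using take_Suc_sum[OF i] .
    moreover have "sum_list (take (Suc i) b) = sum_list (take i b) + b ! i"
      using take_Suc_sum i len by simp
    moreover have "sum_list (take (Suc i) a) = sum_list (take (Suc i) b)" using eq i by simp
    moreover have "sum_list (take i a) = sum_list (take i b)" using eq i by simp
    ultimately show "a ! i = b ! i" by simp
  qed
qed

lemma lub_unique: "maj_lub N S s \<Longrightarrow> maj_lub N S t \<Longrightarrow> s = t"
  unfolding maj_lub_def by (metis maj_antisym)

lemma desc_prob_ps:
  assumes "a \<in> desc_prob N"
  shows "0 \<le> sum_list (take k a)" "sum_list (take k a) \<le> 1" "sum_list (take N a) = 1"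
proof -
  have nn: "\<forall>t\<in>set a. 0 \<le> t" and s1: "sum_list a = 1" and len: "length a = N"
    using assms by (auto simp: desc_prob_def)
  show "0 \<le> sum_list (take k a)" using nn by (intro sum_list_nonneg) (auto dest: in_set_takeD)
  have "sum_list a = sum_list (take k a) + sum_list (drop k a)"
    by (metis append_take_drop_id sum_list_append)
  moreover have "0 \<le> sum_list (drop k a)" using nn by (intro sum_list_nonneg) (auto dest: in_set_dropD)
  ultimately show "sum_list (take k a) \<le> 1" using s1 by simp
  show "sum_list (take N a) = 1" using len s1 by simp
qed

definition concave_on_N :: "nat \<Rightarrow> (nat \<Rightarrow> real) \<Rightarrow> bool" where
  "concave_on_N N g \<longleftrightarrow> (\<forall>k. k + 2 \<le> N \<longrightarrow> g k + g (k + 2) \<le> 2 * g (k + 1))"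

lemma concave_diff_mono:
  fixes h :: "nat \<Rightarrow> real"
  assumes "concave_on_N N h" "i \<le> j" "j < N"
  shows "h (Suc j) - h j \<le> h (Suc i) - h i"
  using assms(2,3)
proof (induction j rule: dec_induct)
  case base then show ?case by simp
next
  case (step j)
  have "h j + h (j + 2) \<le> 2 * h (j + 1)" using assms(1) step.prems unfolding concave_on_N_def by simp
  then have "h (Suc (Suc j)) - h (Suc j) \<le> h (Suc j) - h j" by (simp add: numeral_2_eq_2)
  also have "\<dots> \<le> h (Suc i) - h i" using step by simp
  finally show ?case .
qed

lemma lub_exists:
  assumes Sne: "S \<noteq> {}" and Sd: "S \<subseteq> desc_prob N"
  shows "\<exists>s. maj_lub N S s"
proof -
  define c where "c k = Sup ((\<lambda>a. sum_list (take k a)) ` S)" for k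
  have bdd: "bdd_above ((\<lambda>a. sum_list (take k a)) ` S)" for k
    using Sd desc_prob_ps(2) by (intro bdd_aboveI[of _ 1]) blast
  have c_ge: "sum_list (take k a) \<le> c k" if "a \<in> S" for a k
    unfolding c_def using bdd that by (intro cSup_upper) auto
  have c_le1: "c k \<le> 1" for k
    unfolding c_def using Sne Sd desc_prob_ps(2) by (intro cSup_least) blast+
  have c0: "c 0 = 0" unfolding c_def using Sne by simp
  have cN: "c N = 1"
  proof -
    have "\<forall>a\<in>S. sum_list (take N a) = 1" using Sd desc_prob_ps(3) by blast
    then have "(\<lambda>a. sum_list (take N a)) ` S = {1}" using Sne by auto
    then show ?thesis unfolding c_def by simp
  qed
  have c_least: "c k \<le> T" if "\<And>a. a \<in> S \<Longrightarrow> sum_list (take k a) \<le> T" for k T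
    unfolding c_def using Sne that by (intro cSup_least) blast+
  define G where "G = {g. concave_on_N N g \<and> (\<forall>k\<le>N. c k \<le> g k)}"
  define h where "h k = Inf ((\<lambda>g. g k) ` G)" for k
  define g0 :: "nat \<Rightarrow> real" where "g0 k = (if k = 0 then 0 else 1)" for k
  have g0G: "g0 \<in> G"
    unfolding G_def concave_on_N_def g0_def using c0 c_le1 by auto
  have g1G: "(\<lambda>k. 1) \<in> G"
    unfolding G_def concave_on_N_def using c_le1 by auto
  have bddb: "bdd_below ((\<lambda>g. g k) ` G)" if "k \<le> N" for k
    using that unfolding G_def by (intro bdd_belowI[of _ "c k"]) auto
  have h_le: "h k \<le> g k" if "g \<in> G" "k \<le> N" for g k
    unfolding h_def using that bddb by (intro cInf_lower) auto
  have h_ge: "c k \<le> h k" if "k \<le> N" for k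
    unfolding h_def using g0G that unfolding G_def by (intro cInf_greatest) auto
  have h0: "h 0 = 0" using h_le[OF g0G, of 0] h_ge[of 0] c0 by (simp add: g0_def)
  have hN: "h N = 1" using h_le[OF g1G, of N] h_ge[of N] cN by simp
  have h1: "h k \<le> 1" if "k \<le> N" for k using h_le[OF g1G that] by simp
  have hconc: "concave_on_N N h"
    unfolding concave_on_N_def
  proof (intro allI impI)
    fix k assume k: "k + 2 \<le> N"
    have "(h k + h (k + 2)) / 2 \<le> h (k + 1)"
      unfolding h_def[of "k+1"]
    proof (rule cInf_greatest)
      show "(\<lambda>g. g (k + 1)) ` G \<noteq> {}" using g0G by blast
      fix z assume "z \<in> (\<lambda>g. g (k + 1)) ` G"
      then obtain g where g: "g \<in> G" "z = g (k + 1)" by blast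
      have "h k + h (k + 2) \<le> g k + g (k + 2)" using h_le[OF g(1)] k by (intro add_mono) auto
      also have "\<dots> \<le> 2 * g (k + 1)" using g(1) k unfolding G_def concave_on_N_def by auto
      finally show "(h k + h (k + 2)) / 2 \<le> z" using g(2) by simp
    qed
    then show "h k + h (k + 2) \<le> 2 * h (k + 1)" by simp
  qed
  define s where "s = map (\<lambda>i. h (Suc i) - h i) [0..<N]"
  have ps_s: "sum_list (take k s) = h k" if "k \<le> N" for k
    unfolding s_def using that by (simp add: take_map_upt_sum sum_lessThan_telescope h0)
  have slen: "length s = N" by (simp add: s_def)
  have snth: "s ! i = h (Suc i) - h i" if "i < N" for i using that by (simp add: s_def)
  have smono: "s ! j \<le> s ! i" if "i \<le> j" "j < N" for i j
    using that concave_diff_mono[OF hconc] by (simp add: snth)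
  have sdesc: "s \<in> desc_prob N"
  proof -
    have "sorted (rev s)"
    proof (subst sorted_iff_nth_mono, intro allI impI)
      fix i j assume "i \<le> j" "j < length (rev s)"
      then show "rev s ! i \<le> rev s ! j" using smono slen by (simp add: rev_nth)
    qed
    moreover have "0 \<le> t" if "t \<in> set s" for t
    proof -
      obtain i where i: "i < N" "t = s ! i" using \<open>t \<in> set s\<close> slen by (auto simp: in_set_conv_nth)
      have "0 \<le> s ! (N - 1)" using snth[of "N - 1"] i hN h1[of "N - 1"] by simp
      also have "\<dots> \<le> s ! i" using smono[of i "N - 1"] i by simp
      finally show ?thesis using i by simp
    qed
    moreover have "sum_list s = 1" using ps_s[of N] hN slen by simp
    ultimately show ?thesis using slen by (simp add: desc_prob_def)
  qed
  have upper: "majorized a s" if "a \<in> S" for a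
  proof -
    have a: "a \<in> desc_prob N" using that Sd by blast
    have "length a = N" using a by (simp add: desc_prob_def)
    moreover have "sum_list (take k a) \<le> sum_list (take k s)" if "k \<le> N" for k
      using c_ge[OF \<open>a \<in> S\<close>, of k] h_ge[OF that] ps_s[OF that] by simp
    moreover have "sum_list a = sum_list s" using a sdesc by (simp add: desc_prob_def)
    ultimately show ?thesis unfolding majorized_def using slen by simp
  qed
  have least: "majorized s t" if t: "t \<in> desc_prob N" and ub: "\<forall>a\<in>S. majorized a t" for t
  proof -
    define T where "T k = sum_list (take k t)" for k
    have tlen: "length t = N" using t by (simp add: desc_prob_def)
    have tsorted: "sorted (rev t)" using t by (simp add: desc_prob_def)
    have tmono: "t ! j \<le> t ! i" if "i \<le> j" "j < N" for i j
    proof -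
      have "rev t ! (N - Suc j) \<le> rev t ! (N - Suc i)"
        using tsorted that tlen by (intro sorted_nth_mono) auto
      then show ?thesis using that tlen by (simp add: rev_nth)
    qed
    have "concave_on_N N T"
      unfolding concave_on_N_def
    proof (intro allI impI)
      fix k assume k: "k + 2 \<le> N"
      have "T (k + 1) = T k + t ! k" unfolding T_def using k tlen take_Suc_sum[of k t] by simp
      moreover have "T (k + 2) = T (k + 1) + t ! (k + 1)" unfolding T_def
        using k tlen take_Suc_sum[of "k+1" t] by (simp add: numeral_2_eq_2)
      moreover have "t ! (k + 1) \<le> t ! k" using tmono[of k "k+1"] k by simp
      ultimately show "T k + T (k + 2) \<le> 2 * T (k + 1)" by simp
    qed
    moreover have "c k \<le> T k" if "k \<le> N" for k
    proof (rule c_least)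
      fix a assume aS: "a \<in> S"
      then have "majorized a t" using ub by blast
      moreover have "length a = N" using aS Sd by (auto simp: desc_prob_def)
      ultimately show "sum_list (take k a) \<le> T k" using that unfolding majorized_def T_def by auto
    qed
    ultimately have TG: "T \<in> G" unfolding G_def by auto
    have "sum_list (take k s) \<le> sum_list (take k t)" if "k \<le> N" for k
      using h_le[OF TG that] ps_s[OF that] by (simp add: T_def)
    moreover have "sum_list s = sum_list t" using t sdesc by (simp add: desc_prob_def)
    ultimately show ?thesis unfolding majorized_def using slen tlen by simp
  qed
  show ?thesis using sdesc upper least unfolding maj_lub_def by blast
qed

lemma lub_desc: "maj_lub N S s \<Longrightarrow> s \<in> desc_prob N"
  by (simp add: maj_lub_def)

lemma join_lub:
  assumes "a \<in> desc_prob N" "b \<in> desc_prob N"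
  shows "maj_lub N {a, b} (maj_join N a b)"
proof -
  obtain s where s: "maj_lub N {a, b} s" using lub_exists[of "{a,b}" N] assms by auto
  have "\<exists>!s. maj_lub N {a, b} s" using s lub_unique by blast
  then show ?thesis unfolding maj_join_def by (rule theI')
qed

lemma foldl_lub:
  assumes "a0 \<in> desc_prob N" "set bs \<subseteq> desc_prob N"
  shows "maj_lub N (insert a0 (set bs)) (foldl (maj_join N) a0 bs)"
  using assms
proof (induction bs arbitrary: a0)
  case Nil
  then show ?case by (auto simp: maj_lub_def maj_refl)
next
  case (Cons b bs)
  let ?j = "maj_join N a0 b"
  have bd: "b \<in> desc_prob N" using Cons.prems by simp
  have J: "maj_lub N {a0, b} ?j" by (rule join_lub[OF Cons.prems(1) bd])
  have jd: "?j \<in> desc_prob N" using J by (rule lub_desc)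
  have IH: "maj_lub N (insert ?j (set bs)) (foldl (maj_join N) ?j bs)"
    using Cons.IH[OF jd] Cons.prems by simp
  let ?r = "foldl (maj_join N) ?j bs"
  have "maj_lub N (insert a0 (set (b # bs))) ?r"
    unfolding maj_lub_def
  proof (intro conjI ballI impI)
    show "?r \<in> desc_prob N" using IH by (rule lub_desc)
    have jr: "majorized ?j ?r" using IH by (simp add: maj_lub_def)
    fix a assume "a \<in> insert a0 (set (b # bs))"
    then show "majorized a ?r"
    proof (elim insertE)
      assume "a = a0" then show ?thesis using J jr maj_trans by (auto simp: maj_lub_def)
    next
      assume "a \<in> set (b # bs)"
      then have "a = b \<or> a \<in> set bs" by simp
      then show ?thesis
      proof
        assume "a = b"
        moreover have "majorized b ?j" using J by (simp add: maj_lub_def)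
        ultimately show ?thesis using jr by (metis maj_trans)
      next
        assume "a \<in> set bs"
        then show ?thesis using IH unfolding maj_lub_def by blast
      qed
    qed
  next
    fix t assume t: "t \<in> desc_prob N" and ub: "\<forall>a\<in>insert a0 (set (b # bs)). majorized a t"
    have "majorized ?j t" using J t ub by (auto simp: maj_lub_def)
    then have "\<forall>a\<in>insert ?j (set bs). majorized a t" using ub by auto
    then show "majorized ?r t" using IH t by (auto simp: maj_lub_def)
  qed
  then show ?case by simp
qed



lemma cont_coord2: "continuous_on S (\<lambda>y::nat \<Rightarrow> nat \<Rightarrow> complex. y i a)"
proof -
  have "continuous_on UNIV ((\<lambda>z::nat \<Rightarrow> complex. z a) \<circ> (\<lambda>y::nat \<Rightarrow> nat \<Rightarrow> complex. y i))"
    by (rule continuous_on_compose) (auto intro: continuous_on_subset[OF continuous_on_product_coordinates])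
  then show ?thesis by (auto simp: o_def intro: continuous_on_subset)
qed

lemma cont_joint: "continuous_on S (\<lambda>y. joint N \<rho> x y j m)"
  unfolding joint_def by (intro continuous_intros cont_coord2)

lemma cont_Max:
  assumes "finite F" "F \<noteq> {}" "\<And>T. T \<in> F \<Longrightarrow> continuous_on S (g T)"
  shows "continuous_on S (\<lambda>y. Max ((\<lambda>T. g T y :: real) ` F))"
  using assms
proof (induction F rule: finite_ne_induct)
  case (singleton T) then show ?case by simp
next
  case (insert T F)
  have "continuous_on S (\<lambda>y. max (g T y) (Max ((\<lambda>T. g T y) ` F)))"
    using insert by (intro continuous_intros) auto
  then show ?case using insert by simp
qed

definition ksets :: "nat \<Rightarrow> nat \<Rightarrow> nat set set" where
  "ksets N k = {T. T \<subseteq> {..<N} \<and> card T = k}"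

lemma ksets_fin: "finite (ksets N k)"
  unfolding ksets_def by (rule finite_subset[of _ "Pow {..<N}"]) auto

lemma ksets_ne: assumes "k \<le> N" shows "ksets N k \<noteq> {}"
proof -
  have "{..<k} \<in> ksets N k" using assms by (auto simp: ksets_def)
  then show ?thesis by blast
qed

lemma f_formula:
  assumes "k \<le> N"
  shows "sum_list (take k (pcond N \<rho> x y)) = (\<Sum>m<N. Max ((\<lambda>T. \<Sum>j\<in>T. joint N \<rho> x y j m) ` ksets N k))"
  using pcond_take[OF assms] topk_Max[OF assms] by (simp add: ksets_def)

lemma cont_f:
  assumes "k \<le> N"
  shows "continuous_on S (\<lambda>y. sum_list (take k (pcond N \<rho> x y)))"
proof -
  have "continuous_on S (\<lambda>y. (\<Sum>m<N. Max ((\<lambda>T. \<Sum>j\<in>T. joint N \<rho> x y j m) ` ksets N k)))"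
    by (intro continuous_on_sum cont_Max ksets_fin ksets_ne[OF assms] cont_joint)
  then show ?thesis using f_formula[OF assms] by simp
qed

definition trunc :: "nat \<Rightarrow> (nat \<Rightarrow> nat \<Rightarrow> complex) \<Rightarrow> nat \<Rightarrow> nat \<Rightarrow> complex" where
  "trunc N y = (\<lambda>i a. if i < N \<and> a < N then y i a else 0)"

lemma joint_trunc:
  assumes "m < N"
  shows "joint N \<rho> x (trunc N y) j m = joint N \<rho> x y j m"
  unfolding joint_def
  by (rule arg_cong[where f=Re], intro sum.cong refl) (use assms in \<open>simp add: trunc_def\<close>)

lemma pcond_trunc: "pcond N \<rho> x (trunc N y) = pcond N \<rho> x y"
  unfolding pcond_def
proof (intro map_cong refl sum.cong)
  fix i m assume "m \<in> {..<N}"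
  then have "(\<lambda>j. joint N \<rho> x (trunc N y) j m) = (\<lambda>j. joint N \<rho> x y j m)"
    using joint_trunc by auto
  then show "desc N (\<lambda>j. joint N \<rho> x (trunc N y) j m) ! i = desc N (\<lambda>j. joint N \<rho> x y j m) ! i"
    by simp
qed

lemma onb_trunc: "onb N (trunc N y) = onb N y"
proof -
  have "cinner N (trunc N y i) (trunc N y j) = cinner N (y i) (y j)" if "i < N" "j < N" for i j
    unfolding cinner_def by (intro sum.cong refl) (use that in \<open>simp add: trunc_def\<close>)
  then show ?thesis unfolding onb_def by auto
qed

definition Kset :: "nat \<Rightarrow> (nat \<Rightarrow> nat \<Rightarrow> complex) set" where
  "Kset N = {y. onb N y \<and> (\<forall>i a. \<not> (i < N \<and> a < N) \<longrightarrow> y i a = 0)}"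

lemma trunc_K:
  assumes "onb N y" shows "trunc N y \<in> Kset N"
proof -
  have o: "onb N (trunc N y)" using assms by (simp add: onb_trunc)
  have "\<forall>i a. \<not> (i < N \<and> a < N) \<longrightarrow> trunc N y i a = 0" by (simp add: trunc_def)
  then show ?thesis using o by (simp add: Kset_def)
qed

lemma compact_PiE_UNIV:
  assumes "\<And>i. compact (S i)"
  shows "compact (PiE UNIV S)"
proof -
  have "compactin (product_topology (\<lambda>i. euclidean) UNIV) (PiE UNIV S)"
    using assms by (simp add: compactin_PiE)
  then show ?thesis by (simp add: euclidean_product_topology)
qed

lemma onb_norm_le:
  assumes "onb N y" "i < N" "a < N"
  shows "norm (y i a) \<le> 1"
proof -
  have "(\<Sum>b<N. cnj (y i b) * y i b) = 1" using assms unfolding onb_def cinner_def by auto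
  moreover have "cnj (y i b) * y i b = complex_of_real ((norm (y i b))\<^sup>2)" for b
    using complex_norm_square[of "y i b"] by (metis mult.commute)
  ultimately have "complex_of_real (\<Sum>b<N. (norm (y i b))\<^sup>2) = 1" by simp
  then have s1: "(\<Sum>b<N. (norm (y i b))\<^sup>2) = 1" using of_real_eq_1_iff by blast
  have "(norm (y i a))\<^sup>2 \<le> (\<Sum>b<N. (norm (y i b))\<^sup>2)"
    using assms(3) by (intro member_le_sum) auto
  then have "(norm (y i a))\<^sup>2 \<le> 1\<^sup>2" using s1 by simp
  then show ?thesis by (rule power2_le_imp_le) simp
qed

lemma compact_K: "compact (Kset N)"
proof -
  define Box where "Box = PiE UNIV (\<lambda>i::nat. PiE UNIV (\<lambda>a::nat. cball (0::complex) 1))"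
  have cB: "compact Box" unfolding Box_def by (intro compact_PiE_UNIV compact_cball)
  have sub: "Kset N \<subseteq> Box"
  proof
    fix y assume y: "y \<in> Kset N"
    have "norm (y i a) \<le> 1" for i a
      using y onb_norm_le[of N y i a] by (cases "i < N \<and> a < N") (auto simp: Kset_def)
    then show "y \<in> Box" unfolding Box_def by (auto simp: PiE_iff)
  qed
  have eq: "Kset N = (\<Inter>i\<in>{..<N}. \<Inter>j\<in>{..<N}. {y. cinner N (y i) (y j) = (if i = j then 1 else 0)})
      \<inter> (\<Inter>p\<in>{p. \<not> (fst p < N \<and> snd p < N)}. {y. y (fst p) (snd p) = 0})"
    by (auto simp: Kset_def onb_def)
  have cl: "closed (Kset N)"
    unfolding eq
    by (intro closed_Int closed_INT ballI closed_Collect_eq continuous_intros)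
       (auto simp: cinner_def intro!: continuous_intros cont_coord2)
  have "Kset N = Box \<inter> Kset N" using sub by blast
  then show ?thesis using compact_Int_closed[OF cB cl] by simp
qed

lemma K_ne: "Kset N \<noteq> {}"
proof -
  define y0 :: "nat \<Rightarrow> nat \<Rightarrow> complex" where "y0 i a = (if i = a \<and> a < N then 1 else 0)" for i a
  have "cinner N (y0 i) (y0 j) = (if i = j then 1 else 0)" if "i < N" "j < N" for i j
  proof -
    have "cinner N (y0 i) (y0 j) = (\<Sum>a<N. if a = i \<and> i = j then 1 else 0)"
      unfolding cinner_def by (intro sum.cong refl) (auto simp: y0_def)
    also have "\<dots> = (if i = j then 1 else 0)"
      using that by (cases "i = j") (simp_all add: sum.delta)
    finally show ?thesis .
  qed
  then have "y0 \<in> Kset N" by (auto simp: Kset_def onb_def y0_def)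
  then show ?thesis by blast
qed

lemma exists_max:
  assumes "k \<le> N"
  shows "\<exists>b. onb N b \<and> (\<forall>y. onb N y \<longrightarrow>
     sum_list (take k (pcond N \<rho> x y)) \<le> sum_list (take k (pcond N \<rho> x b)))"
proof -
  obtain b where b: "b \<in> Kset N" and bm: "\<forall>y\<in>Kset N. sum_list (take k (pcond N \<rho> x y)) \<le> sum_list (take k (pcond N \<rho> x b))"
    using continuous_attains_sup[OF compact_K K_ne cont_f[OF assms]] by blast
  have "onb N b" using b by (simp add: Kset_def)
  moreover have "sum_list (take k (pcond N \<rho> x y)) \<le> sum_list (take k (pcond N \<rho> x b))" if "onb N y" for y
    using bm trunc_K[OF that] pcond_trunc[of N \<rho> x y] by metis
  ultimately show ?thesis by blast
qed



theorem proposition1: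
  fixes N :: nat and \<rho> x :: "nat \<Rightarrow> nat \<Rightarrow> complex"
  assumes "0 < N" and "density_op N \<rho>" and "onb N x"
  shows "(\<exists>!s. maj_lub N {pcond N \<rho> x y | y. onb N y} s)
    \<and> (\<exists>B. \<forall>k\<in>{1..N}. onb N (B k) \<and>
           (\<forall>y. onb N y \<longrightarrow> sum_list (take k (pcond N \<rho> x y)) \<le> sum_list (take k (pcond N \<rho> x (B k)))))
    \<and> (\<forall>B s. (\<forall>k\<in>{1..N}. onb N (B k) \<and>
           (\<forall>y. onb N y \<longrightarrow> sum_list (take k (pcond N \<rho> x y)) \<le> sum_list (take k (pcond N \<rho> x (B k)))))
         \<longrightarrow> maj_lub N {pcond N \<rho> x y | y. onb N y} s
         \<longrightarrow> s = foldl (maj_join N) (pcond N \<rho> x (B 1)) (map (\<lambda>k. pcond N \<rho> x (B k)) [2..<N+1]))"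
proof -
  note rho = assms(2) and xo = assms(3)
  define S where "S = {pcond N \<rho> x y | y. onb N y}"
  have Sd: "S \<subseteq> desc_prob N" unfolding S_def using pcond_desc_prob[OF rho xo] by blast
  obtain y0 where "y0 \<in> Kset N" using K_ne by blast
  then have "onb N y0" by (simp add: Kset_def)
  then have Sne: "S \<noteq> {}" unfolding S_def by blast
  have P1: "\<exists>!s. maj_lub N S s"
    using lub_exists[OF Sne Sd] lub_unique by blast
  have "\<forall>k\<in>{1..N}. \<exists>b. onb N b \<and> (\<forall>y. onb N y \<longrightarrow>
     sum_list (take k (pcond N \<rho> x y)) \<le> sum_list (take k (pcond N \<rho> x b)))"
    using exists_max by auto
  then have P2: "\<exists>B. \<forall>k\<in>{1..N}. onb N (B k) \<and>
           (\<forall>y. onb N y \<longrightarrow> sum_list (take k (pcond N \<rho> x y)) \<le> sum_list (take k (pcond N \<rho> x (B k))))"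
    by (rule bchoice)
  have P3: "s = foldl (maj_join N) (pcond N \<rho> x (B 1)) (map (\<lambda>k. pcond N \<rho> x (B k)) [2..<N+1])"
    if HB: "\<forall>k\<in>{1..N}. onb N (B k) \<and>
           (\<forall>y. onb N y \<longrightarrow> sum_list (take k (pcond N \<rho> x y)) \<le> sum_list (take k (pcond N \<rho> x (B k))))"
    and Hs: "maj_lub N S s" for B s
  proof -
    define a0 where "a0 = pcond N \<rho> x (B 1)"
    define L where "L = map (\<lambda>k. pcond N \<rho> x (B k)) [2..<N+1]"
    have Bk: "pcond N \<rho> x (B k) \<in> insert a0 (set L)" if "k \<in> {1..N}" for k
    proof (cases "k = 1")
      case True then show ?thesis by (simp add: a0_def)
    next
      case False
      then have "k \<in> set [2..<N+1]" using that by auto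
      then have "pcond N \<rho> x (B k) \<in> set L" unfolding L_def set_map by (rule imageI)
      then show ?thesis by (rule insertI2)
    qed
    have inS: "a \<in> S" if "a \<in> insert a0 (set L)" for a
    proof -
      have "\<exists>k\<in>{1..N}. a = pcond N \<rho> x (B k)"
      proof (cases "a = a0")
        case True then show ?thesis using \<open>0 < N\<close> by (auto simp: a0_def)
      next
        case False
        then have "a \<in> set L" using that by simp
        then obtain k where "k \<in> set [2..<N+1]" "a = pcond N \<rho> x (B k)"
          unfolding L_def by auto
        then show ?thesis by auto
      qed
      then obtain k where "k \<in> {1..N}" "a = pcond N \<rho> x (B k)" by blast
      then show ?thesis using HB unfolding S_def by blast
    qed
    have a0d: "a0 \<in> desc_prob N" using inS Sd by blast
    have Ld: "set L \<subseteq> desc_prob N" using inS Sd by blast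
    have F: "maj_lub N (insert a0 (set L)) (foldl (maj_join N) a0 L)"
      by (rule foldl_lub[OF a0d Ld])
    have G: "maj_lub N (insert a0 (set L)) s"
      unfolding maj_lub_def
    proof (intro conjI ballI impI)
      show "s \<in> desc_prob N" using Hs by (rule lub_desc)
      fix a assume "a \<in> insert a0 (set L)"
      then show "majorized a s" using inS Hs by (auto simp: maj_lub_def)
    next
      fix t assume t: "t \<in> desc_prob N" and ub: "\<forall>a\<in>insert a0 (set L). majorized a t"
      have "\<forall>a\<in>S. majorized a t"
      proof
        fix a assume aS: "a \<in> S"
        then obtain y where y: "onb N y" "a = pcond N \<rho> x y" unfolding S_def by blast
        have ad: "a \<in> desc_prob N" using aS Sd by blast
        have tl: "length t = N" "sum_list t = 1" using t by (auto simp: desc_prob_def)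
        have al: "length a = N" "sum_list a = 1" using ad by (auto simp: desc_prob_def)
        have "sum_list (take k a) \<le> sum_list (take k t)" if k: "k \<le> N" for k
        proof (cases "k = 0")
          case True then show ?thesis by simp
        next
          case False
          then have kk: "k \<in> {1..N}" using k by simp
          have "sum_list (take k a) \<le> sum_list (take k (pcond N \<rho> x (B k)))"
            using HB kk y by auto
          also have "\<dots> \<le> sum_list (take k t)"
            using ub Bk[OF kk] k unfolding majorized_def
            by (metis pcond_length)
          finally show ?thesis .
        qed
        then show "majorized a t" unfolding majorized_def using tl al by simp
      qed
      then show "majorized s t" using Hs t by (auto simp: maj_lub_def)
    qed
    have "s = foldl (maj_join N) a0 L" using lub_unique[OF G F] .
    then show ?thesis by (simp add: a0_def L_def)
  qed
  show ?thesis using P1 P2 P3 unfolding S_def by blast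
qed


end
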